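(* Let $0\le\alpha\le\beta\le\pi/2$ and $P_1,P_2>0$, and define $\mathcal R(\theta)$ as in the context. If $|\alpha-\beta|\le\pi/4$, then $\bigcup_{\theta\in[\alpha,\beta]}\mathcal R(\theta)$ is convex; i.e. the first outer bound of the achievable rate region of a two-hop MAC with two relay nodes is convex.
   Context: Let $\mathcal C(x)=\frac12\log_2(1+x)$, $\phi_1(\theta)=P_1\cos^2(\theta-\alpha)$, $\phi_2(\theta)=P_2\cos^2(\theta-\beta)$, $\phi=\phi_1+\phi_2$, and $\mathcal R(\theta)=\{(R_1,R_2)\ge0:R_1\le\mathcal C(\phi_1(\theta)),R_2\le\mathcal C(\phi_2(\theta)),R_1+R_2\le\mathcal C(\phi(\theta))\}$. In a two-user two-hop MAC with two relays, with $\alpha,\beta,\theta$ the polar angles of the normalized source-to-relay channel vectors and of the amplification vector $\mathbf B\mathbf h_1$, and $P_i=\|\mathbf h_{0i}\|^2P_{S_i}$, the first outer bound (destination noise omitted) is the union of the sets $\mathcal R(\theta)$, $\theta\in[\alpha,\beta]$. *)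

theory Defs
  imports "HOL-Analysis.Analysis"
begin

definition capC :: "real \<Rightarrow> real" where
  "capC x = (1/2) * log 2 (1 + x)"

definition phi1 :: "real \<Rightarrow> real \<Rightarrow> real \<Rightarrow> real" where
  "phi1 P1 \<alpha> \<theta> = P1 * (cos (\<theta> - \<alpha>))\<^sup>2"

definition phi2 :: "real \<Rightarrow> real \<Rightarrow> real \<Rightarrow> real" where
  "phi2 P2 \<beta> \<theta> = P2 * (cos (\<theta> - \<beta>))\<^sup>2"

definition rate_region :: "real \<Rightarrow> real \<Rightarrow> real \<Rightarrow> real \<Rightarrow> real \<Rightarrow> (real \<times> real) set" where
  "rate_region P1 P2 \<alpha> \<beta> \<theta> =
     {(R1, R2). 0 \<le> R1 \<and> 0 \<le> R2 \<and>
        R1 \<le> capC (phi1 P1 \<alpha> \<theta>) \<and>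
        R2 \<le> capC (phi2 P2 \<beta> \<theta>) \<and>
        R1 + R2 \<le> capC (phi1 P1 \<alpha> \<theta> + phi2 P2 \<beta> \<theta>)}"

end

theory Submission
  imports Defs
begin

lemma cos2_concave:
  fixes c :: real
  shows "concave_on {c - pi/4 .. c + pi/4} (\<lambda>x. (cos (x - c))\<^sup>2)"
proof (rule f''_le0_imp_concave[where f' = "\<lambda>x. - sin (2 * (x - c))"
        and f'' = "\<lambda>x. - 2 * cos (2 * (x - c))"])
  show "convex {c - pi/4 .. c + pi/4}" by simp
next
  fix x
  show "((\<lambda>x. (cos (x - c))\<^sup>2) has_real_derivative - sin (2 * (x - c))) (at x)"
  proof -
    have "((\<lambda>x. (cos (x - c))\<^sup>2) has_real_derivative 2 * cos (x - c) * (- sin (x - c) * 1)) (at x)"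
      by (rule derivative_eq_intros | simp)+
    moreover have "2 * cos (x - c) * (- sin (x - c) * 1) = - sin (2 * (x - c))"
      using sin_double[of "x - c"] by (simp add: algebra_simps)
    ultimately show ?thesis by simp
  qed
next
  fix x
  show "((\<lambda>x. - sin (2 * (x - c))) has_real_derivative - 2 * cos (2 * (x - c))) (at x)"
    by (rule derivative_eq_intros | simp)+
next
  fix x assume "x \<in> {c - pi/4 .. c + pi/4}"
  then have "0 \<le> cos (2 * (x - c))" by (intro cos_ge_zero) auto
  then show "- 2 * cos (2 * (x - c)) \<le> 0" by simp
qed

lemma capC_mono_concave:
  fixes a a1 a2 t :: real
  assumes "0 \<le> a1" "0 \<le> a2" "0 \<le> t" "t \<le> 1" "(1 - t) * a1 + t * a2 \<le> a"
  shows "(1 - t) * capC a1 + t * capC a2 \<le> capC a"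
proof -
  have "(1 - t) * log 2 (1 + a1) + t * log 2 (1 + a2)
        \<le> log 2 ((1 - t) *\<^sub>R (1 + a1) + t *\<^sub>R (1 + a2))"
    using concave_onD[OF log_concave[of 2], of t "1 + a1" "1 + a2"] assms by auto
  also have "(1 - t) *\<^sub>R (1 + a1) + t *\<^sub>R (1 + a2) = 1 + ((1 - t) * a1 + t * a2)"
    by (simp add: algebra_simps)
  also have "log 2 (1 + ((1 - t) * a1 + t * a2)) \<le> log 2 (1 + a)"
  proof -
    have "0 \<le> (1 - t) * a1 + t * a2" using assms by simp
    then show ?thesis using assms(5) by (subst log_le_cancel_iff) linarith+
  qed
  finally have F: "(1 - t) * log 2 (1 + a1) + t * log 2 (1 + a2) \<le> log 2 (1 + a)" .
  have "(1 - t) * capC a1 + t * capC a2 = (1/2) * ((1 - t) * log 2 (1 + a1) + t * log 2 (1 + a2))"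
    unfolding capC_def by (simp add: field_simps)
  then show ?thesis using F unfolding capC_def by linarith
qed

theorem lemma4:
  fixes P1 P2 \<alpha> \<beta> :: real
  assumes "0 \<le> \<alpha>" "\<alpha> \<le> \<beta>" "\<beta> \<le> pi / 2"
    and "P1 > 0" "P2 > 0"
    and "\<bar>\<alpha> - \<beta>\<bar> \<le> pi / 4"
  shows "convex (\<Union>\<theta>\<in>{\<alpha>..\<beta>}. rate_region P1 P2 \<alpha> \<beta> \<theta>)"
proof (unfold convex_alt, intro ballI allI impI)
  fix x y and u :: real
  assume x: "x \<in> (\<Union>\<theta>\<in>{\<alpha>..\<beta>}. rate_region P1 P2 \<alpha> \<beta> \<theta>)"
    and y: "y \<in> (\<Union>\<theta>\<in>{\<alpha>..\<beta>}. rate_region P1 P2 \<alpha> \<beta> \<theta>)"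
    and u: "0 \<le> u \<and> u \<le> 1"
  obtain a where a: "a \<in> {\<alpha>..\<beta>}" "x \<in> rate_region P1 P2 \<alpha> \<beta> a" using x by auto
  obtain b where b: "b \<in> {\<alpha>..\<beta>}" "y \<in> rate_region P1 P2 \<alpha> \<beta> b" using y by auto
  define th where "th = (1 - u) * a + u * b"
  have th: "th \<in> {\<alpha>..\<beta>}"
    using a(1) b(1) u unfolding th_def
    using convexD_alt[of "{\<alpha>..\<beta>}" a b u] by (auto simp: algebra_simps)
  have Sa: "{\<alpha>..\<beta>} \<subseteq> {\<alpha> - pi/4 .. \<alpha> + pi/4}" using assms by auto
  have Sb: "{\<alpha>..\<beta>} \<subseteq> {\<beta> - pi/4 .. \<beta> + pi/4}" using assms by auto
  have c1: "(1 - u) * (cos (a - \<alpha>))\<^sup>2 + u * (cos (b - \<alpha>))\<^sup>2 \<le> (cos (th - \<alpha>))\<^sup>2"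
    using concave_onD[OF cos2_concave[of \<alpha>], of u a b] u a(1) b(1) Sa
    unfolding th_def by auto
  have c2: "(1 - u) * (cos (a - \<beta>))\<^sup>2 + u * (cos (b - \<beta>))\<^sup>2 \<le> (cos (th - \<beta>))\<^sup>2"
    using concave_onD[OF cos2_concave[of \<beta>], of u a b] u a(1) b(1) Sb
    unfolding th_def by auto
  have p1: "(1 - u) * phi1 P1 \<alpha> a + u * phi1 P1 \<alpha> b \<le> phi1 P1 \<alpha> th"
  proof -
    have "P1 * ((1 - u) * (cos (a - \<alpha>))\<^sup>2 + u * (cos (b - \<alpha>))\<^sup>2) \<le> P1 * (cos (th - \<alpha>))\<^sup>2"
      using c1 assms(4) by (intro mult_left_mono) auto
    then show ?thesis unfolding phi1_def by (simp add: algebra_simps)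
  qed
  have p2: "(1 - u) * phi2 P2 \<beta> a + u * phi2 P2 \<beta> b \<le> phi2 P2 \<beta> th"
  proof -
    have "P2 * ((1 - u) * (cos (a - \<beta>))\<^sup>2 + u * (cos (b - \<beta>))\<^sup>2) \<le> P2 * (cos (th - \<beta>))\<^sup>2"
      using c2 assms(5) by (intro mult_left_mono) auto
    then show ?thesis unfolding phi2_def by (simp add: algebra_simps)
  qed
  have n1: "\<And>t. 0 \<le> phi1 P1 \<alpha> t" using assms(4) by (simp add: phi1_def)
  have n2: "\<And>t. 0 \<le> phi2 P2 \<beta> t" using assms(5) by (simp add: phi2_def)
  have C1: "(1 - u) * capC (phi1 P1 \<alpha> a) + u * capC (phi1 P1 \<alpha> b) \<le> capC (phi1 P1 \<alpha> th)"
    using capC_mono_concave[OF n1 n1 _ _ p1] u by auto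
  have C2: "(1 - u) * capC (phi2 P2 \<beta> a) + u * capC (phi2 P2 \<beta> b) \<le> capC (phi2 P2 \<beta> th)"
    using capC_mono_concave[OF n2 n2 _ _ p2] u by auto
  have p3: "(1 - u) * (phi1 P1 \<alpha> a + phi2 P2 \<beta> a) + u * (phi1 P1 \<alpha> b + phi2 P2 \<beta> b)
      \<le> phi1 P1 \<alpha> th + phi2 P2 \<beta> th" using p1 p2 by (simp add: algebra_simps)
  have C3: "(1 - u) * capC (phi1 P1 \<alpha> a + phi2 P2 \<beta> a) + u * capC (phi1 P1 \<alpha> b + phi2 P2 \<beta> b)
      \<le> capC (phi1 P1 \<alpha> th + phi2 P2 \<beta> th)"
    using capC_mono_concave[OF add_nonneg_nonneg[OF n1 n2] add_nonneg_nonneg[OF n1 n2] _ _ p3] u by auto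
  obtain x1 x2 where xx: "x = (x1, x2)" by (cases x)
  obtain y1 y2 where yy: "y = (y1, y2)" by (cases y)
  have xa: "0 \<le> x1" "0 \<le> x2" "x1 \<le> capC (phi1 P1 \<alpha> a)" "x2 \<le> capC (phi2 P2 \<beta> a)"
    "x1 + x2 \<le> capC (phi1 P1 \<alpha> a + phi2 P2 \<beta> a)"
    using a(2) unfolding xx rate_region_def by auto
  have yb: "0 \<le> y1" "0 \<le> y2" "y1 \<le> capC (phi1 P1 \<alpha> b)" "y2 \<le> capC (phi2 P2 \<beta> b)"
    "y1 + y2 \<le> capC (phi1 P1 \<alpha> b + phi2 P2 \<beta> b)"
    using b(2) unfolding yy rate_region_def by auto
  have u0: "0 \<le> u" "0 \<le> 1 - u" using u by auto
  have i1: "(1 - u) * x1 + u * y1 \<le> capC (phi1 P1 \<alpha> th)"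
    using C1 mult_left_mono[OF xa(3) u0(2)] mult_left_mono[OF yb(3) u0(1)] by linarith
  have i2: "(1 - u) * x2 + u * y2 \<le> capC (phi2 P2 \<beta> th)"
    using C2 mult_left_mono[OF xa(4) u0(2)] mult_left_mono[OF yb(4) u0(1)] by linarith
  have i3: "(1 - u) * x1 + u * y1 + ((1 - u) * x2 + u * y2) \<le> capC (phi1 P1 \<alpha> th + phi2 P2 \<beta> th)"
    using C3 mult_left_mono[OF xa(5) u0(2)] mult_left_mono[OF yb(5) u0(1)]
    by (simp add: algebra_simps)
  have "(1 - u) *\<^sub>R x + u *\<^sub>R y \<in> rate_region P1 P2 \<alpha> \<beta> th"
    unfolding xx yy rate_region_def using i1 i2 i3 xa yb u0 by auto
  then show "(1 - u) *\<^sub>R x + u *\<^sub>R y \<in> (\<Union>\<theta>\<in>{\<alpha>..\<beta>}. rate_region P1 P2 \<alpha> \<beta> \<theta>)"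
    using th by auto
qed

end
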